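(* If $G$ is a finite connected graph, then $\mathrm{gp_e}(G) \le 2\cdot \mathrm{ip_e}(G)$.
   Context: A geodesic (isometric path) in a graph is a shortest path between its endpoints. A set $S$ of edges of a graph $G$ is an edge general position set if no geodesic of $G$ contains three edges of $S$; $\mathrm{gp_e}(G)$ is the maximum cardinality of an edge general position set of $G$. An isometric path edge cover of $G$ is a collection of isometric paths of $G$ such that every edge of $G$ lies on at least one path of the collection; $\mathrm{ip_e}(G)$ is the minimum cardinality of an isometric path edge cover of $G$. *)

theory Defs
  imports Main
begin

definition fin_graph :: "'a set \<Rightarrow> ('a \<Rightarrow> 'a \<Rightarrow> bool) \<Rightarrow> bool" where
  "fin_graph V E \<longleftrightarrow> finite V \<and> (\<forall>u v. E u v \<longrightarrow> u \<in> V \<and> v \<in> V)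
     \<and> (\<forall>u v. E u v \<longrightarrow> E v u) \<and> (\<forall>u. \<not> E u u)"

definition gedges :: "'a set \<Rightarrow> ('a \<Rightarrow> 'a \<Rightarrow> bool) \<Rightarrow> 'a set set" where
  "gedges V E = {{u, v} | u v. u \<in> V \<and> v \<in> V \<and> E u v}"

definition walk :: "'a set \<Rightarrow> ('a \<Rightarrow> 'a \<Rightarrow> bool) \<Rightarrow> 'a list \<Rightarrow> bool" where
  "walk V E p \<longleftrightarrow> p \<noteq> [] \<and> set p \<subseteq> V \<and> (\<forall>i. Suc i < length p \<longrightarrow> E (p ! i) (p ! Suc i))"

definition connected_graph :: "'a set \<Rightarrow> ('a \<Rightarrow> 'a \<Rightarrow> bool) \<Rightarrow> bool" where
  "connected_graph V E \<longleftrightarrow> (\<forall>u\<in>V. \<forall>v\<in>V. \<exists>p. walk V E p \<and> hd p = u \<and> last p = v)"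

definition gdist :: "'a set \<Rightarrow> ('a \<Rightarrow> 'a \<Rightarrow> bool) \<Rightarrow> 'a \<Rightarrow> 'a \<Rightarrow> nat" where
  "gdist V E u v = (LEAST n. \<exists>p. walk V E p \<and> hd p = u \<and> last p = v \<and> length p = Suc n)"

definition path_edges :: "'a list \<Rightarrow> 'a set set" where
  "path_edges p = {{p ! i, p ! Suc i} | i. Suc i < length p}"

definition geodesic :: "'a set \<Rightarrow> ('a \<Rightarrow> 'a \<Rightarrow> bool) \<Rightarrow> 'a list \<Rightarrow> bool" where
  "geodesic V E p \<longleftrightarrow> walk V E p \<and> length p - 1 = gdist V E (hd p) (last p)"

definition edge_gp_set :: "'a set \<Rightarrow> ('a \<Rightarrow> 'a \<Rightarrow> bool) \<Rightarrow> 'a set set \<Rightarrow> bool" where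
  "edge_gp_set V E S \<longleftrightarrow> S \<subseteq> gedges V E \<and>
     (\<forall>p. geodesic V E p \<longrightarrow> \<not> (\<exists>T \<subseteq> S \<inter> path_edges p. card T = 3))"

definition gp_e :: "'a set \<Rightarrow> ('a \<Rightarrow> 'a \<Rightarrow> bool) \<Rightarrow> nat" where
  "gp_e V E = Max {card S | S. edge_gp_set V E S}"

definition ip_edge_cover :: "'a set \<Rightarrow> ('a \<Rightarrow> 'a \<Rightarrow> bool) \<Rightarrow> 'a list set \<Rightarrow> bool" where
  "ip_edge_cover V E C \<longleftrightarrow> finite C \<and> (\<forall>p\<in>C. geodesic V E p) \<and>
     gedges V E \<subseteq> (\<Union>p\<in>C. path_edges p)"

definition ip_e :: "'a set \<Rightarrow> ('a \<Rightarrow> 'a \<Rightarrow> bool) \<Rightarrow> nat" where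
  "ip_e V E = Min {card C | C. ip_edge_cover V E C}"

end

theory Submission
  imports Defs
begin

lemma succ_conv: "(\<forall>i. Suc i < length p \<longrightarrow> E (p ! i) (p ! Suc i)) \<longleftrightarrow> successively E p"
proof (induction E p rule: successively.induct)
  case (3 P x y xs)
  have "(\<forall>i. Suc i < length (x#y#xs) \<longrightarrow> P ((x#y#xs) ! i) ((x#y#xs) ! Suc i)) \<longleftrightarrow>
        P x y \<and> (\<forall>i. Suc i < length (y#xs) \<longrightarrow> P ((y#xs) ! i) ((y#xs) ! Suc i))"
    (is "?L \<longleftrightarrow> ?R")
  proof
    assume L: ?L
    have "P x y" using spec[OF L, of 0] by simp
    moreover have "\<forall>i. Suc i < length (y#xs) \<longrightarrow> P ((y#xs) ! i) ((y#xs) ! Suc i)"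
    proof (intro allI impI)
      fix i assume "Suc i < length (y#xs)"
      then show "P ((y#xs) ! i) ((y#xs) ! Suc i)" using spec[OF L, of "Suc i"] by simp
    qed
    ultimately show ?R by blast
  next
    assume R: ?R
    show ?L
    proof (intro allI impI)
      fix i assume i: "Suc i < length (x#y#xs)"
      show "P ((x#y#xs) ! i) ((x#y#xs) ! Suc i)"
      proof (cases i)
        case 0 then show ?thesis using R by simp
      next
        case (Suc j) then show ?thesis using R i by simp
      qed
    qed
  qed
  then show ?case using 3 by simp
qed auto

lemma walk_alt: "walk V E p \<longleftrightarrow> p \<noteq> [] \<and> set p \<subseteq> V \<and> successively E p"
  unfolding walk_def succ_conv by simp

lemma gdist_le:
  assumes "walk V E p"
  shows "gdist V E (hd p) (last p) \<le> length p - 1"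
proof -
  have "\<exists>q. walk V E q \<and> hd q = hd p \<and> last q = last p \<and> length q = Suc (length p - 1)"
    using assms by (intro exI[of _ p]) (auto simp: walk_def)
  then show ?thesis unfolding gdist_def by (rule Least_le)
qed

lemma geodesic_distinct:
  assumes "geodesic V E p"
  shows "distinct p"
proof (rule ccontr)
  assume "\<not> distinct p"
  then obtain xs y ys zs where p: "p = xs @ [y] @ ys @ [y] @ zs"
    using not_distinct_decomp by blast
  have w: "walk V E p" using assms by (simp add: geodesic_def)
  define q where "q = xs @ [y] @ zs"
  have sp: "successively E p" using w by (simp add: walk_alt)
  have "successively E q"
    using sp unfolding p q_def
    by (auto simp: successively_append_iff successively_Cons)
  moreover have "set q \<subseteq> set p" unfolding p q_def by auto
  ultimately have wq: "walk V E q" using w unfolding walk_alt q_def by auto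
  have hq: "hd q = hd p" "last q = last p" unfolding p q_def
    by (cases xs; simp; cases zs; simp)+
  have "gdist V E (hd p) (last p) \<le> length q - 1" using gdist_le[OF wq] hq by simp
  moreover have "length q < length p" unfolding p q_def by simp
  moreover have "length p - 1 = gdist V E (hd p) (last p)" using assms by (simp add: geodesic_def)
  moreover have "length q \<ge> 1" unfolding q_def by simp
  ultimately show False by linarith
qed

lemma geodesics_finite:
  assumes "finite V"
  shows "finite {p. geodesic V E p}"
proof -
  have "{p. geodesic V E p} \<subseteq> {xs. set xs \<subseteq> V \<and> length xs \<le> card V}"
  proof safe
    fix p assume g: "geodesic V E p"
    then have s: "set p \<subseteq> V" by (simp add: geodesic_def walk_def)
    then show "\<And>x. x \<in> set p \<Longrightarrow> x \<in> V" by auto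
    have "length p = card (set p)" using geodesic_distinct[OF g] by (simp add: distinct_card)
    also have "\<dots> \<le> card V" using s assms by (rule card_mono[rotated])
    finally show "length p \<le> card V" .
  qed
  then show ?thesis using finite_lists_length_le[OF assms] by (rule finite_subset)
qed

lemma cover_exists:
  assumes "fin_graph V E"
  shows "ip_edge_cover V E ((\<lambda>(u,v). [u,v]) ` {(u,v). E u v})"
proof -
  have fin: "finite V" and inV: "\<And>u v. E u v \<Longrightarrow> u \<in> V \<and> v \<in> V" and irr: "\<And>u. \<not> E u u"
    using assms by (auto simp: fin_graph_def)
  have "{(u,v). E u v} \<subseteq> V \<times> V" using inV by auto
  then have f: "finite {(u,v). E u v}" using fin by (meson finite_SigmaI finite_subset)
  have geo: "geodesic V E [u,v]" if "E u v" for u v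
  proof -
    have w: "walk V E [u,v]" using that inV by (simp add: walk_alt)
    have le: "gdist V E u v \<le> 1" using gdist_le[OF w] by simp
    have "\<exists>n q. walk V E q \<and> hd q = u \<and> last q = v \<and> length q = Suc n"
      using w by (intro exI[of _ 1] exI[of _ "[u,v]"]) auto
    then have "\<exists>q. walk V E q \<and> hd q = u \<and> last q = v \<and> length q = Suc (gdist V E u v)"
      unfolding gdist_def by (rule LeastI_ex)
    then obtain q where q: "walk V E q" "hd q = u" "last q = v" "length q = Suc (gdist V E u v)"
      by blast
    have "gdist V E u v \<noteq> 0"
    proof
      assume "gdist V E u v = 0"
      then obtain x where "q = [x]" using q(4) by (cases q) auto
      then show False using q irr that by simp
    qed
    then show ?thesis using w le by (simp add: geodesic_def)
  qed
  show ?thesis unfolding ip_edge_cover_def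
  proof (intro conjI)
    show "finite ((\<lambda>(u,v). [u,v]) ` {(u,v). E u v})" using f by simp
    show "\<forall>p\<in>(\<lambda>(u,v). [u,v]) ` {(u,v). E u v}. geodesic V E p" using geo by auto
    show "gedges V E \<subseteq> (\<Union>p\<in>(\<lambda>(u,v). [u,v]) ` {(u,v). E u v}. path_edges p)"
    proof
      fix e assume "e \<in> gedges V E"
      then obtain u v where e: "e = {u,v}" "E u v" by (auto simp: gedges_def)
      have "e \<in> path_edges [u,v]" unfolding path_edges_def e by (rule CollectI, rule exI[of _ 0]) simp
      then show "e \<in> (\<Union>p\<in>(\<lambda>(u,v). [u,v]) ` {(u,v). E u v}. path_edges p)" using e by blast
    qed
  qed
qed

lemma gp_bound:
  assumes "fin_graph V E" "edge_gp_set V E S" "ip_edge_cover V E C"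
  shows "card S \<le> 2 * card C"
proof -
  have gP: "gedges V E \<subseteq> Pow V" using assms(1) unfolding gedges_def fin_graph_def by blast
  have SG: "S \<subseteq> gedges V E" using assms(2) unfolding edge_gp_set_def by blast
  have fV: "finite V" using assms(1) unfolding fin_graph_def by blast
  have fS: "finite S" using SG gP fV by (meson finite_Pow_iff finite_subset)
  have fC: "finite C" using assms(3) unfolding ip_edge_cover_def by blast
  have cov: "gedges V E \<subseteq> (\<Union>p\<in>C. path_edges p)" using assms(3) unfolding ip_edge_cover_def by blast
  have Ssub: "S \<subseteq> (\<Union>p\<in>C. S \<inter> path_edges p)"
    using SG cov by blast
  have gpS: "\<forall>p. geodesic V E p \<longrightarrow> \<not> (\<exists>T \<subseteq> S \<inter> path_edges p. card T = 3)"
    using assms(2) unfolding edge_gp_set_def by blast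
  have each: "card (S \<inter> path_edges p) \<le> 2" if "p \<in> C" for p
  proof (rule ccontr)
    assume "\<not> ?thesis"
    then have "3 \<le> card (S \<inter> path_edges p)" by simp
    then obtain T where T: "T \<subseteq> S \<inter> path_edges p" "card T = 3"
      by (rule obtain_subset_with_card_n)
    have "geodesic V E p" using assms(3) that unfolding ip_edge_cover_def by blast
    then have "\<not> (\<exists>T \<subseteq> S \<inter> path_edges p. card T = 3)" using gpS by simp
    then show False using T by simp
  qed
  have "card S \<le> card (\<Union>p\<in>C. S \<inter> path_edges p)"
    using Ssub fS fC by (intro card_mono) auto
  also have "\<dots> \<le> (\<Sum>p\<in>C. card (S \<inter> path_edges p))" by (rule card_UN_le[OF fC])
  also have "\<dots> \<le> (\<Sum>p\<in>C. 2)" by (rule sum_mono) (rule each)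
  also have "\<dots> = 2 * card C" by simp
  finally show ?thesis .
qed

theorem lemma2p2:
  fixes V :: "'a set" and E :: "'a \<Rightarrow> 'a \<Rightarrow> bool"
  assumes "fin_graph V E" and "connected_graph V E"
  shows "gp_e V E \<le> 2 * ip_e V E"
proof -
  let ?I = "{card C | C. ip_edge_cover V E C}"
  have fV: "finite V" using assms(1) by (simp add: fin_graph_def)
  let ?G = "{p. geodesic V E p}"
  have "?I \<subseteq> {..card ?G}"
  proof
    fix n assume "n \<in> ?I"
    then obtain C where "n = card C" "ip_edge_cover V E C" by blast
    then have "C \<subseteq> ?G" "n = card C" by (auto simp: ip_edge_cover_def)
    then show "n \<in> {..card ?G}" using card_mono[OF geodesics_finite[OF fV]] by auto
  qed
  then have fI: "finite ?I" by (rule finite_subset) simp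
  have neI: "?I \<noteq> {}" using cover_exists[OF assms(1)] by blast
  have "ip_e V E \<in> ?I" unfolding ip_e_def using fI neI by (rule Min_in)
  then obtain C0 where C0: "ip_e V E = card C0" "ip_edge_cover V E C0" by auto
  let ?S = "{card S | S. edge_gp_set V E S}"
  have bnd: "\<forall>n\<in>?S. n \<le> 2 * card C0" using gp_bound[OF assms(1) _ C0(2)] by blast
  then have fS: "finite ?S" by (meson atMost_iff finite_atMost finite_subset subsetI)
  have "edge_gp_set V E {}" by (simp add: edge_gp_set_def)
  then have neS: "?S \<noteq> {}" by blast
  have "gp_e V E \<le> 2 * card C0" unfolding gp_e_def using fS neS bnd by (simp add: Max_le_iff)
  then show ?thesis using C0 by simp
qed

end
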